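(* For the Hard-SVM algorithm, there exist linearly-separable data distributions $D_A,D_B$ over $\mathbb{R}\times\{-1,1\}$ and a training-set size $n$ that induce an evolutionary prediction game with beneficial coexistence: there is an equilibrium $\mathbf{p}^*$ with $p^*_A>0$, $p^*_B>0$ such that each group's fitness at $\mathbf{p}^*$ exceeds its fitness when it is the sole group in the population, $F_k(\mathbf{p}^* )>F_k(\mathbf{e}_k)$ for $k\in\{A,B\}$.
   Context: Hard-SVM: given a linearly separable training set $\{(x_i,y_i)\}_{i=1}^n\subset\mathbb{R}^d\times\{-1,1\}$, output $\mathrm{sign}(w^*\cdot x+b^* )$ with $(w^*,b^* )=\arg\max_{(w,b):\|w\|=1}\min_iy_i(w\cdot x_i+b)$. The learning algorithm samples $S\sim D_{\mathbf{p}}^n$ i.i.d. from $D_{\mathbf{p}}=p_AD_A+p_BD_B$ ($\mathbf{p}\in\Delta^2$) and outputs the Hard-SVM classifier $h_S$; the evolutionary prediction game is $F_k(\mathbf{p})=\mathbb{E}_S[\Pr_{(x,y)\sim D_k}[h_S(x)=y]]$. $\mathbf{e}_k$ is the state in which only group $k$ is present. Equilibrium: $\mathrm{supp}(\mathbf{p}^* )\subseteq\arg\max_kF_k(\mathbf{p}^* )$. A distribution is linearly separable if its support can be separated by a hyperplane according to the labels. *)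

theory Defs
  imports "HOL-Probability.Probability"
begin

text \<open>Data points are pairs (x, y) with x real and label y an integer in {-1, 1}.
  The two groups are A and B; a population state p in the simplex is given by
  its A-component pA in [0,1] (pB = 1 - pA).\<close>

datatype grp = GA | GB

definition labels_ok :: "(real \<times> int) pmf \<Rightarrow> bool" where
  "labels_ok D \<longleftrightarrow> (\<forall>(x, y) \<in> set_pmf D. y \<in> {-1, 1})"

definition lin_separable :: "(real \<times> int) pmf \<Rightarrow> bool" where
  "lin_separable D \<longleftrightarrow> (\<exists>w b. w \<noteq> 0 \<and> (\<forall>(x, y) \<in> set_pmf D. of_int y * (w * x + b) > 0))"

definition margin :: "(real \<times> int) list \<Rightarrow> real \<Rightarrow> real \<Rightarrow> real" where
  "margin S w b = Min ((\<lambda>(x, y). of_int y * (w * x + b)) ` set S)"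

definition svm_params :: "(real \<times> int) list \<Rightarrow> real \<times> real" where
  "svm_params S = (SOME (w, b). \<bar>w\<bar> = 1 \<and>
      (\<forall>w' b'. \<bar>w'\<bar> = 1 \<longrightarrow> margin S w' b' \<le> margin S w b))"

text \<open>Hard-SVM classifier h_S. If all training labels coincide the max-margin problem is
  unbounded (b to infinity); the supremum is approached by the constant classifier with that label.\<close>
definition hard_svm :: "(real \<times> int) list \<Rightarrow> real \<Rightarrow> real" where
  "hard_svm S x =
     (if S \<noteq> [] \<and> (\<forall>z \<in> set S. snd z = snd (hd S)) then of_int (snd (hd S))
      else sgn (fst (svm_params S) * x + snd (svm_params S)))"

definition mix :: "real \<Rightarrow> (real \<times> int) pmf \<Rightarrow> (real \<times> int) pmf \<Rightarrow> (real \<times> int) pmf" where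
  "mix pA DA DB = bind_pmf (bernoulli_pmf pA) (\<lambda>c. if c then DA else DB)"

fun iid :: "nat \<Rightarrow> 'a pmf \<Rightarrow> 'a list pmf" where
  "iid 0 D = return_pmf []"
| "iid (Suc n) D = bind_pmf D (\<lambda>z. map_pmf (Cons z) (iid n D))"

definition group_dist :: "(real \<times> int) pmf \<Rightarrow> (real \<times> int) pmf \<Rightarrow> grp \<Rightarrow> (real \<times> int) pmf" where
  "group_dist DA DB k = (case k of GA \<Rightarrow> DA | GB \<Rightarrow> DB)"

definition fitness :: "(real \<times> int) pmf \<Rightarrow> (real \<times> int) pmf \<Rightarrow> nat \<Rightarrow> grp \<Rightarrow> real \<Rightarrow> real" where
  "fitness DA DB n k pA =
     measure_pmf.expectation (iid n (mix pA DA DB))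
       (\<lambda>S. measure_pmf.prob (group_dist DA DB k) {(x, y). hard_svm S x = of_int y})"

definition share :: "grp \<Rightarrow> real \<Rightarrow> real" where
  "share k pA = (case k of GA \<Rightarrow> pA | GB \<Rightarrow> 1 - pA)"

definition equilibrium :: "(real \<times> int) pmf \<Rightarrow> (real \<times> int) pmf \<Rightarrow> nat \<Rightarrow> real \<Rightarrow> bool" where
  "equilibrium DA DB n pA \<longleftrightarrow> 0 \<le> pA \<and> pA \<le> 1 \<and>
     (\<forall>k. share k pA > 0 \<longrightarrow> (\<forall>k'. fitness DA DB n k' pA \<le> fitness DA DB n k pA))"

definition pure_state :: "grp \<Rightarrow> real" where
  "pure_state k = (case k of GA \<Rightarrow> 1 | GB \<Rightarrow> 0)"

end

theory Submission
  imports Defs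
begin

abbreviation "PP \<equiv> (1::real, 1::int)"
abbreviation "NN \<equiv> (-1::real, -1::int)"

lemma supp_iid: "S \<in> set_pmf (iid n D) \<Longrightarrow> length S = n \<and> set S \<subseteq> set_pmf D"
  by (induction n arbitrary: S) fastforce+

lemma pmf_iid_rep: "pmf (iid n D) (replicate n z) = pmf D z ^ n"
proof (induction n)
  case 0 then show ?case by simp
next
  case (Suc n)
  have "pmf (iid (Suc n) D) (replicate (Suc n) z)
     = (\<integral>x. pmf (map_pmf (Cons x) (iid n D)) (z # replicate n z) \<partial>measure_pmf D)"
    by (simp add: pmf_bind)
  also have "\<dots> = (\<Sum>a\<in>{z}. pmf (map_pmf (Cons a) (iid n D)) (z # replicate n z) * pmf D a)"
    apply (rule integral_measure_pmf_real)
     apply (auto simp: pmf_map vimage_def)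
    apply (rule ccontr)
    apply simp
    done
  also have "\<dots> = pmf (iid n D) (replicate n z) * pmf D z"
    using pmf_map_inj'[of "Cons z" "iid n D" "replicate n z"] by (simp add: inj_def)
  finally show ?case using Suc by simp
qed

lemma margin_PN: "set S = {PP, NN} \<Longrightarrow> margin S w b = min (w + b) (w - b)"
  unfolding margin_def by simp

lemma svm_PN: "set S = {PP, NN} \<Longrightarrow> svm_params S = (1, 0)"
  unfolding svm_params_def
proof (rule some_equality)
  assume s: "set S = {PP, NN}"
  show "case (1::real, 0::real) of (w, b) \<Rightarrow> \<bar>w\<bar> = 1 \<and> (\<forall>w' b'. \<bar>w'\<bar> = 1 \<longrightarrow> margin S w' b' \<le> margin S w b)"
    using s by (auto simp: margin_PN)
  fix x assume "case x of (w, b) \<Rightarrow> \<bar>w\<bar> = 1 \<and> (\<forall>w' b'. \<bar>w'\<bar> = 1 \<longrightarrow> margin S w' b' \<le> margin S w b)"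
  then obtain w b where x: "x = (w, b)" "\<bar>w\<bar> = 1" "margin S 1 0 \<le> margin S w b"
    by (cases x) auto
  then show "x = (1, 0)" using s by (auto simp: margin_PN min_def split: if_splits)
qed

lemma hard_svm_cases:
  assumes "set S \<subseteq> {PP, NN}" "S \<noteq> []" "x \<in> {1, -1}"
  shows "hard_svm S x = (if set S = {PP} then 1 else if set S = {NN} then -1 else x)"
proof -
  have h: "hd S \<in> set S" using assms(2) by simp
  consider "set S = {PP}" | "set S = {NN}" | "set S = {PP, NN}"
    using assms(1,2) by (cases S) auto
  then show ?thesis
  proof cases
    case 1 then show ?thesis using h unfolding hard_svm_def using assms by auto
  next
    case 2 then show ?thesis using h unfolding hard_svm_def using assms by auto
  next
    case 3
    then have "\<not> (\<forall>z \<in> set S. snd z = snd (hd S))" by auto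
    then show ?thesis using 3 assms unfolding hard_svm_def by (auto simp: svm_PN)
  qed
qed

lemma prob_PN:
  assumes "set_pmf Dk \<subseteq> {PP, NN}"
  shows "measure_pmf.prob Dk A = (if PP \<in> A then pmf Dk PP else 0) + (if NN \<in> A then pmf Dk NN else 0)"
proof -
  have "measure_pmf.prob Dk A = measure_pmf.prob Dk (A \<inter> {PP, NN})"
    using assms measure_Int_set_pmf[of Dk A] measure_Int_set_pmf[of Dk "A \<inter> {PP, NN}"]
    by (metis Int_absorb2 inf.assoc inf_commute)
  also have "\<dots> = sum (pmf Dk) (A \<inter> {PP, NN})" by (simp add: measure_measure_pmf_finite)
  finally show ?thesis by (auto simp: Int_insert_right)
qed

lemma pmf_PN_sum:
  assumes "set_pmf Dk \<subseteq> {PP, NN}"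
  shows "pmf Dk NN = 1 - pmf Dk PP"
proof -
  have "measure_pmf.prob Dk UNIV = 1" by simp
  then show ?thesis using prob_PN[OF assms, of UNIV] by simp
qed

lemma g_val:
  assumes K: "set_pmf Dk \<subseteq> {PP, NN}" and S: "set S \<subseteq> {PP, NN}" "length S = n" "n \<ge> 1"
  shows "measure_pmf.prob Dk {(x, y). hard_svm S x = of_int y}
     = 1 - (if S = replicate n PP then 1 - pmf Dk PP else 0) - (if S = replicate n NN then pmf Dk PP else 0)"
proof -
  have ne: "S \<noteq> []" using S by auto
  have r1: "S = replicate n PP \<longleftrightarrow> set S = {PP}"
  proof
    assume "S = replicate n PP" then show "set S = {PP}" using S by simp
  next
    assume "set S = {PP}" then show "S = replicate n PP" using S by (intro replicate_eqI) auto
  qed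
  have r2: "S = replicate n NN \<longleftrightarrow> set S = {NN}"
  proof
    assume "S = replicate n NN" then show "set S = {NN}" using S by simp
  next
    assume "set S = {NN}" then show "S = replicate n NN" using S by (intro replicate_eqI) auto
  qed
  have h1: "hard_svm S 1 = (if set S = {PP} then 1 else if set S = {NN} then -1 else 1)"
    using hard_svm_cases[OF S(1) ne, of 1] by simp
  have h2: "hard_svm S (-1) = (if set S = {PP} then 1 else if set S = {NN} then -1 else -1)"
    using hard_svm_cases[OF S(1) ne, of "-1"] by simp
  have "PP \<noteq> NN" by simp
  show ?thesis
    unfolding prob_PN[OF K] pmf_PN_sum[OF K] r1 r2
    using h1 h2 by (auto split: if_splits)
qed

lemma fit_formula:
  assumes D: "set_pmf D \<subseteq> {PP,NN}" and K: "set_pmf Dk \<subseteq> {PP,NN}" and n: "n \<ge> 1"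
  shows "measure_pmf.expectation (iid n D) (\<lambda>S. measure_pmf.prob Dk {(x,y). hard_svm S x = of_int y})
     = 1 - pmf D PP ^ n * (1 - pmf Dk PP) - (1 - pmf D PP)^n * pmf Dk PP"
proof -
  define r where "r = pmf Dk PP"
  define h where "h = (\<lambda>S. (if S = replicate n PP then 1 - r else 0) + (if S = replicate n NN then r else 0))"
  have fin: "finite (set_pmf (iid n D))"
    by (rule finite_subset[of _ "{S. set S \<subseteq> {PP,NN} \<and> length S = n}"])
       (use supp_iid D in \<open>fastforce\<close>, rule finite_lists_length_eq, simp)
  have "measure_pmf.expectation (iid n D) (\<lambda>S. measure_pmf.prob Dk {(x,y). hard_svm S x = of_int y})
      = measure_pmf.expectation (iid n D) (\<lambda>S. 1 - h S)"
  proof (rule integral_cong_AE)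
    show "AE S in measure_pmf (iid n D). measure_pmf.prob Dk {(x,y). hard_svm S x = of_int y} = 1 - h S"
      unfolding AE_measure_pmf_iff
    proof
      fix S assume "S \<in> set_pmf (iid n D)"
      then have "set S \<subseteq> {PP,NN}" "length S = n" using supp_iid D by blast+
      then show "measure_pmf.prob Dk {(x,y). hard_svm S x = of_int y} = 1 - h S"
        using g_val[OF K _ _ n] n unfolding h_def r_def by (auto simp: replicate_eq_replicate)
    qed
  qed simp_all
  also have "\<dots> = 1 - measure_pmf.expectation (iid n D) h"
    by (subst Bochner_Integration.integral_diff) (auto intro: integrable_measure_pmf_finite[OF fin])
  also have "measure_pmf.expectation (iid n D) h = (\<Sum>a\<in>{replicate n PP, replicate n NN}. h a * pmf (iid n D) a)"
    by (rule integral_measure_pmf_real) (auto simp: h_def split: if_splits)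
  also have "\<dots> = (1 - r) * pmf D PP ^ n + r * pmf D NN ^ n"
    using n by (simp add: h_def pmf_iid_rep replicate_eq_replicate)
  finally show ?thesis unfolding r_def pmf_PN_sum[OF D] by (simp add: algebra_simps)
qed


definition fPN :: "bool \<Rightarrow> real \<times> int" where "fPN b = (if b then PP else NN)"
definition DA0 where "DA0 = map_pmf fPN (bernoulli_pmf (4/5))"
definition DB0 where "DB0 = map_pmf fPN (bernoulli_pmf (1/5))"

lemma inj_fPN: "inj fPN" by (auto simp: inj_def fPN_def split: if_splits)

lemma set_D0: "set_pmf DA0 \<subseteq> {PP,NN}" "set_pmf DB0 \<subseteq> {PP,NN}"
  by (auto simp: DA0_def DB0_def fPN_def)

lemma pmf_D0: "pmf DA0 PP = 4/5" "pmf DB0 PP = 1/5"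
  using pmf_map_inj'[OF inj_fPN, of "bernoulli_pmf (4/5)" True]
        pmf_map_inj'[OF inj_fPN, of "bernoulli_pmf (1/5)" True]
  by (simp_all add: DA0_def DB0_def fPN_def)

lemma set_mix: "set_pmf (mix p DA0 DB0) \<subseteq> {PP,NN}"
proof -
  have "\<forall>x. set_pmf (if x then DA0 else DB0) \<subseteq> {PP,NN}" using set_D0 by simp
  then show ?thesis unfolding mix_def set_bind_pmf by blast
qed

lemma memD0: "z \<in> set_pmf DA0 \<Longrightarrow> z = PP \<or> z = NN" "z \<in> set_pmf DB0 \<Longrightarrow> z = PP \<or> z = NN"
  using set_D0 by blast+

lemma pmf_mix: "0 \<le> p \<Longrightarrow> p \<le> 1 \<Longrightarrow> pmf (mix p DA0 DB0) PP = p * (4/5) + (1 - p) * (1/5)"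
  by (simp add: mix_def pmf_bind pmf_D0)

lemma set_gd: "set_pmf (group_dist DA0 DB0 k) \<subseteq> {PP,NN}"
  using set_D0 by (cases k) (auto simp: group_dist_def)

lemma fit: "0 \<le> p \<Longrightarrow> p \<le> 1 \<Longrightarrow> fitness DA0 DB0 4 k p =
   1 - (p * (4/5) + (1 - p) * (1/5)) ^ 4 * (1 - pmf (group_dist DA0 DB0 k) PP)
     - (1 - (p * (4/5) + (1 - p) * (1/5))) ^ 4 * pmf (group_dist DA0 DB0 k) PP"
  unfolding fitness_def by (subst fit_formula[OF set_mix set_gd]) (simp_all add: pmf_mix)

lemma pmf_gd: "pmf (group_dist DA0 DB0 k) PP = (case k of GA \<Rightarrow> 4/5 | GB \<Rightarrow> 1/5)"
  by (cases k) (simp_all add: group_dist_def pmf_D0)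

theorem theorem7:
  shows "\<exists>DA DB :: (real \<times> int) pmf. \<exists>n::nat.
     labels_ok DA \<and> labels_ok DB \<and> lin_separable DA \<and> lin_separable DB \<and> n \<ge> 1 \<and>
     (\<exists>pA. equilibrium DA DB n pA \<and> pA > 0 \<and> 1 - pA > 0 \<and>
        (\<forall>k. fitness DA DB n k pA > fitness DA DB n k (pure_state k)))"
proof (intro exI conjI)
  show "labels_ok DA0" "labels_ok DB0" unfolding labels_ok_def by (auto dest: memD0)
  show "lin_separable DA0" unfolding lin_separable_def
    by (rule exI[of _ "1::real"], rule exI[of _ "0::real"]) (auto dest: memD0)
  show "lin_separable DB0" unfolding lin_separable_def
    by (rule exI[of _ "1::real"], rule exI[of _ "0::real"]) (auto dest: memD0)
  show "(4::nat) \<ge> 1" by simp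
  have half: "\<And>k. fitness DA0 DB0 4 k (1/2) = 15/16"
    by (subst fit) (auto simp: pmf_gd power_divide split: grp.splits)
  show "equilibrium DA0 DB0 4 (1/2)" unfolding equilibrium_def by (simp only: half) simp
  show "(0::real) < 1/2" "(0::real) < 1 - 1/2" by simp_all
  show "\<forall>k. fitness DA0 DB0 4 k (pure_state k) < fitness DA0 DB0 4 k (1/2)"
  proof
    fix k show "fitness DA0 DB0 4 k (pure_state k) < fitness DA0 DB0 4 k (1/2)"
      unfolding half by (cases k) (simp_all add: fit pure_state_def pmf_gd, simp_all add: eval_nat_numeral)
  qed
qed

end
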